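(* Let $(X,\rho,\mu)$ be a $K$-doubling metric measure space, let $U\subseteq X$ be nonempty and let $x$ be a $\mu$-interior point of $U$. Then there exists a map $r_x\colon X\to U$ such that $r_x(y)=y$ for all $y\in U$ and $\rho\big(y,r_x(y)\big)=o\big(\rho(y,x)\big)$ as $y\to x$.
   Context: A $K$-doubling metric measure space ($K>0$) is a triple $(X,\rho,\mu)$ where $(X,\rho)$ is a complete separable metric space and $\mu$ is a Borel-regular outer measure on $X$ with $0<\mu(B_{2r}(x))\le K\mu(B_r(x))<+\infty$ for all $x\in X$, $r>0$. A point $x\in U$ is a $\mu$-interior point of $U$ if there is a Borel set $B\subseteq U$ with $\lim_{r\to0^+}\mu(B_r(x)\setminus B)/\mu(B_r(x))=0$. *)

theory Defs
  imports "HOL-Analysis.Analysis" "HOL-Library.Landau_Symbols"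
begin

text \<open>The underlying space is the whole type
  'a, a complete separable metric space (class polish_space: complete metric space
  with a countable basis, equivalently separable). The Borel-regular outer measure is
  represented by its restriction to the Borel sets, a measure M on the Borel
  sigma-algebra.\<close>
definition doubling_mms :: "real \<Rightarrow> ('a::polish_space) measure \<Rightarrow> bool" where
  "doubling_mms K M \<longleftrightarrow> K > 0 \<and> sets M = sets borel \<and>
     (\<forall>x r. r > 0 \<longrightarrow>
        0 < emeasure M (ball x (2*r)) \<and>
        emeasure M (ball x (2*r)) \<le> ennreal K * emeasure M (ball x r) \<and>
        ennreal K * emeasure M (ball x r) < \<infinity>)"

definition mu_interior_point :: "('a::metric_space) measure \<Rightarrow> 'a set \<Rightarrow> 'a \<Rightarrow> bool" where
  "mu_interior_point M U x \<longleftrightarrow> x \<in> U \<and>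
     (\<exists>B. B \<in> sets borel \<and> B \<subseteq> U \<and>
        ((\<lambda>r. emeasure M (ball x r - B) / emeasure M (ball x r)) \<longlongrightarrow> 0) (at_right 0))"

end

theory Submission
  imports Defs
begin

lemma dm_fin:
  assumes "doubling_mms K M"
  shows "emeasure M (ball y r) < \<infinity>"
proof (cases "r > 0")
  case True
  with assms have "ennreal K * emeasure M (ball y r) < \<infinity>" "K > 0"
    unfolding doubling_mms_def by auto
  then show ?thesis
    using ennreal_mult_less_top by auto
next
  case False
  then have e: "ball y r = {}" by simp
  show ?thesis unfolding e by simp
qed

lemma dm_sets: "doubling_mms K M \<Longrightarrow> A \<in> sets borel \<Longrightarrow> A \<in> sets M"
  unfolding doubling_mms_def by auto

lemma dm_fm:
  assumes "doubling_mms K M"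
  shows "ball y r \<in> fmeasurable M"
  using dm_fin[OF assms] dm_sets[OF assms] by (auto simp: fmeasurable_def)

lemma dm_emeas:
  assumes "doubling_mms K M"
  shows "emeasure M (ball y r) = ennreal (measure M (ball y r))"
proof -
  have "emeasure M (ball y r) \<noteq> top" using dm_fin[OF assms, of y r] by auto
  then show ?thesis by (rule emeasure_eq_ennreal_measure)
qed

lemma dm_pos:
  assumes "doubling_mms K M" "r > 0"
  shows "measure M (ball y r) > 0"
proof -
  have "r/2 > 0" using assms by simp
  then have "0 < emeasure M (ball y (2*(r/2)))"
    using assms(1) unfolding doubling_mms_def by blast
  then show ?thesis using dm_emeas[OF assms(1)] by simp
qed

lemma dm_dbl:
  assumes "doubling_mms K M" "r > 0"
  shows "measure M (ball y (2*r)) \<le> K * measure M (ball y r)"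
proof -
  have K: "K > 0" using assms unfolding doubling_mms_def by auto
  have "emeasure M (ball y (2*r)) \<le> ennreal K * emeasure M (ball y r)"
    using assms unfolding doubling_mms_def by auto
  then have "ennreal (measure M (ball y (2*r))) \<le> ennreal (K * measure M (ball y r))"
    using dm_emeas[OF assms(1)] K by (simp add: ennreal_mult)
  then show ?thesis using K by (simp add: ennreal_le_iff)
qed

lemma dm_iter:
  assumes "doubling_mms K M" "r > 0"
  shows "measure M (ball y (2^k*r)) \<le> K^k * measure M (ball y r)"
proof (induction k)
  case 0
  then show ?case by simp
next
  case (Suc k)
  have K: "K > 0" using assms unfolding doubling_mms_def by auto
  have "measure M (ball y (2^Suc k*r)) = measure M (ball y (2*(2^k*r)))" by (simp add: mult.assoc)
  also have "\<dots> \<le> K * measure M (ball y (2^k*r))"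
    using dm_dbl[OF assms(1), of "2^k*r"] assms(2) by simp
  also have "\<dots> \<le> K * (K^k * measure M (ball y r))"
    using Suc K by (simp add: mult_left_mono)
  finally show ?case by simp
qed


lemma dm_near:
  assumes dm: "doubling_mms K M" and B: "B \<in> sets borel"
    and lim: "((\<lambda>r. emeasure M (ball x r - B) / emeasure M (ball x r)) \<longlongrightarrow> 0) (at_right 0)"
    and eps: "0 < eps" "eps \<le> 1"
  shows "eventually (\<lambda>y. \<exists>b\<in>B. dist y b < eps * dist y x) (at x)"
proof -
  have K: "K > 0" using dm unfolding doubling_mms_def by auto
  obtain k :: nat where k: "3/eps < 2^k" using real_arch_pow[of 2 "3/eps"] by auto
  have k3: "3 < 2^k * eps" using k eps by (simp add: divide_less_eq)
  define e where "e = 1 / K^k"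
  have e: "e > 0" using K by (simp add: e_def)
  have eK: "e * K^k = 1" using K by (simp add: e_def)
  have "eventually (\<lambda>s. emeasure M (ball x s - B) / emeasure M (ball x s) < ennreal e) (at_right 0)"
    using order_tendstoD(2)[OF lim] e by simp
  then obtain \<delta> where \<delta>: "\<delta> > 0"
    "\<And>s. 0 < s \<Longrightarrow> s < \<delta> \<Longrightarrow> emeasure M (ball x s - B) / emeasure M (ball x s) < ennreal e"
    unfolding eventually_at_right_field by auto
  have main: "\<forall>y. y \<noteq> x \<and> dist y x < \<delta>/2 \<longrightarrow> (\<exists>b\<in>B. dist y b < eps * dist y x)"
  proof (intro allI impI)
    fix y assume y: "y \<noteq> x \<and> dist y x < \<delta>/2"
    define D where "D = dist y x"
    have D: "D > 0" "2*D < \<delta>" using y by (auto simp: D_def)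
    show "\<exists>b\<in>B. dist y b < eps * dist y x"
    proof (rule ccontr)
      assume nb: "\<not> ?thesis"
      have epsD: "eps * D \<le> D" using eps D mult_right_mono[of eps 1 D] by simp
      have sub: "ball y (eps*D) \<subseteq> ball x (2*D) - B"
      proof
        fix z assume z: "z \<in> ball y (eps*D)"
        then have "dist y z < D" using epsD by simp
        then have "dist x z < 2*D" using dist_triangle[of x z y] dist_commute[of x y] D_def by simp
        moreover have "z \<notin> B" using nb z by (auto simp: D_def)
        ultimately show "z \<in> ball x (2*D) - B" by simp
      qed
      have sub2: "ball x (2*D) \<subseteq> ball y (2^k*(eps*D))"
      proof
        fix z assume z: "z \<in> ball x (2*D)"
        have "dist y z \<le> dist y x + dist x z" by (rule dist_triangle)
        also have "\<dots> < 3 * D" using z D_def by simp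
        also have "\<dots> < 2^k*(eps*D)" using k3 D by (simp add: mult.assoc[symmetric])
        finally show "z \<in> ball y (2^k*(eps*D))" by simp
      qed
      have setsA: "ball x (2*D) - B \<in> sets M" using dm_sets[OF dm] B by auto
      have finA: "emeasure M (ball x (2*D) - B) < top"
        using emeasure_mono[of "ball x (2*D) - B" "ball x (2*D)" M] dm_fin[OF dm, of x "2*D"]
          dm_sets[OF dm, of "ball x (2*D)"] by auto
      have fmA: "ball x (2*D) - B \<in> fmeasurable M" using setsA finA by (simp add: fmeasurable_def)
      have ea: "emeasure M (ball x (2*D) - B) = ennreal (measure M (ball x (2*D) - B))"
        using finA by (intro emeasure_eq_ennreal_measure) auto
      have bpos: "measure M (ball x (2*D)) > 0" using dm_pos[OF dm] D by simp
      have "ennreal (measure M (ball x (2*D) - B)) / ennreal (measure M (ball x (2*D))) < ennreal e"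
        using \<delta>(2)[of "2*D"] D ea dm_emeas[OF dm] by simp
      then have "ennreal (measure M (ball x (2*D) - B) / measure M (ball x (2*D))) < ennreal e"
        using bpos by (simp add: divide_ennreal)
      then have "measure M (ball x (2*D) - B) / measure M (ball x (2*D)) < e"
        by (subst (asm) ennreal_less_iff) auto
      then have a_lt: "measure M (ball x (2*D) - B) < e * measure M (ball x (2*D))"
        using bpos by (simp add: divide_less_eq)
      have m1: "measure M (ball y (eps*D)) \<le> measure M (ball x (2*D) - B)"
        using measure_mono_fmeasurable[OF sub _ fmA] dm_sets[OF dm] by auto
      have m2: "measure M (ball x (2*D)) \<le> measure M (ball y (2^k*(eps*D)))"
        using measure_mono_fmeasurable[OF sub2 _ dm_fm[OF dm]] dm_sets[OF dm] by auto
      have m3: "measure M (ball y (2^k*(eps*D))) \<le> K^k * measure M (ball y (eps*D))"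
        using dm_iter[OF dm] eps D by simp
      have "measure M (ball y (eps*D)) < e * measure M (ball x (2*D))" using m1 a_lt by simp
      also have "\<dots> \<le> e * (K^k * measure M (ball y (eps*D)))"
        using m2 m3 e by (intro mult_left_mono) auto
      also have "\<dots> = measure M (ball y (eps*D))" using eK by (simp add: mult.assoc[symmetric])
      finally show False by simp
    qed
  qed
  show ?thesis
    unfolding eventually_at using main \<delta>(1) by (auto intro!: exI[of _ "\<delta>/2"])
qed

theorem proposition2p3:
  fixes K :: real and M :: "('a::polish_space) measure" and U :: "'a set" and x :: 'a
  assumes "doubling_mms K M"
    and "U \<noteq> {}"
    and "mu_interior_point M U x"
  shows "\<exists>r :: 'a \<Rightarrow> 'a. (\<forall>y. r y \<in> U) \<and> (\<forall>y\<in>U. r y = y) \<and>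
           (\<lambda>y. dist y (r y)) \<in> o[at x](\<lambda>y. dist y x)"
proof -
  obtain B where xU: "x \<in> U" and B: "B \<in> sets borel" "B \<subseteq> U"
    and lim: "((\<lambda>r. emeasure M (ball x r - B) / emeasure M (ball x r)) \<longlongrightarrow> 0) (at_right 0)"
    using assms(3) unfolding mu_interior_point_def by blast
  have ex: "\<exists>u. u \<in> U \<and> dist y u < infdist y U + (dist y x)^2" if "y \<noteq> x" for y
  proof -
    have "infdist y U < infdist y U + (dist y x)^2" using that by simp
    then have "(INF a\<in>U. dist y a) < infdist y U + (dist y x)^2"
      using infdist_notempty[OF assms(2)] by simp
    moreover have "bdd_below ((\<lambda>a. dist y a) ` U)" by (rule bdd_belowI2[of _ 0]) simp
    ultimately show ?thesis using cINF_less_iff[OF assms(2)] by blast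
  qed
  define r where "r y = (if y \<in> U then y else SOME u. u \<in> U \<and> dist y u < infdist y U + (dist y x)^2)" for y
  have rn: "r y \<in> U \<and> dist y (r y) < infdist y U + (dist y x)^2" if "y \<notin> U" for y
  proof -
    have "y \<noteq> x" using that xU by auto
    then show ?thesis using someI_ex[OF ex] that unfolding r_def by simp
  qed
  have "(\<lambda>y. dist y (r y)) \<in> o[at x](\<lambda>y. dist y x)"
  proof (rule landau_o.smallI)
    fix c :: real assume c: "c > 0"
    have ev1: "eventually (\<lambda>y. \<exists>b\<in>B. dist y b < min (c/2) 1 * dist y x) (at x)"
      using dm_near[OF assms(1) B(1) lim, of "min (c/2) 1"] c by simp
    have ev2: "eventually (\<lambda>y. y \<noteq> x \<and> dist y x < c/2) (at x)"
      unfolding eventually_at using c by (auto intro!: exI[of _ "c/2"])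
    show "eventually (\<lambda>y. norm (dist y (r y)) \<le> c * norm (dist y x)) (at x)"
    proof (rule eventually_mono[OF eventually_conj[OF ev1 ev2]])
      fix y assume h: "(\<exists>b\<in>B. dist y b < min (c/2) 1 * dist y x) \<and> y \<noteq> x \<and> dist y x < c/2"
      then obtain b where b: "b \<in> B" "dist y b < min (c/2) 1 * dist y x" by blast
      show "norm (dist y (r y)) \<le> c * norm (dist y x)"
      proof (cases "y \<in> U")
        case True
        then show ?thesis using c unfolding r_def by simp
      next
        case False
        have "dist y (r y) < infdist y U + (dist y x)^2" using rn[OF False] by simp
        also have "\<dots> \<le> dist y b + (dist y x)^2" using infdist_le[of b U y] b B(2) by auto
        also have "\<dots> \<le> (c/2) * dist y x + (c/2) * dist y x"
        proof -
          have "dist y b \<le> (c/2) * dist y x"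
          proof -
            have "min (c/2) 1 * dist y x \<le> (c/2) * dist y x" by (intro mult_right_mono) auto
            then show ?thesis using b(2) by linarith
          qed
          moreover have "(dist y x)^2 \<le> (c/2) * dist y x"
            using h mult_right_mono[of "dist y x" "c/2" "dist y x"] by (simp add: power2_eq_square)
          ultimately show ?thesis by simp
        qed
        finally show ?thesis by simp
      qed
    qed
  qed
  moreover have "\<forall>y. r y \<in> U" using rn unfolding r_def by auto
  moreover have "\<forall>y\<in>U. r y = y" unfolding r_def by simp
  ultimately show ?thesis by blast
qed

end
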